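(* Let $X$ be a convex subset of a real vector space, $(Y,\langle\cdot,\cdot\rangle)$ a real inner product space, $I:X\to\mathbb{R}$ a bounded above convex function and $\Phi:X\to Y$ an affine operator such that $$\inf_{z\in\Phi(X)}\langle z,y\rangle=-\infty$$ for all $y\in\Phi(X)\setminus\{0\}$. Then the set of all global minima of the function $x\mapsto I(x)+\|\Phi(x)\|^2$ on $X$ is contained in $\Phi^{-1}(0)$.
   Context: If $E,F$ are real vector spaces and $D$ is a convex subset of $E$, an operator $\Phi:D\to F$ is called affine if $\Phi(\lambda x+(1-\lambda)y)=\lambda\Phi(x)+(1-\lambda)\Phi(y)$ for all $x,y\in D$ and $\lambda\in[0,1]$. *)

theory Defs
  imports "HOL-Analysis.Analysis"
begin

definition affine_on :: "'a::real_vector set \<Rightarrow> ('a \<Rightarrow> 'b::real_vector) \<Rightarrow> bool" where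
  "affine_on D \<Phi> \<longleftrightarrow> (\<forall>x\<in>D. \<forall>y\<in>D. \<forall>t::real. 0 \<le> t \<and> t \<le> 1 \<longrightarrow>
      \<Phi> (t *\<^sub>R x + (1 - t) *\<^sub>R y) = t *\<^sub>R \<Phi> x + (1 - t) *\<^sub>R \<Phi> y)"

end

theory Submission
  imports Defs
begin

lemma aff_lim:
  fixes g0 k :: real
  assumes "\<And>t. 0 < t \<Longrightarrow> t \<le> 1 \<Longrightarrow> 0 \<le> g0 + t * k"
  shows "0 \<le> g0"
proof (rule ccontr)
  assume n: "\<not> 0 \<le> g0"
  define t where "t = min 1 (- g0 / (2 * \<bar>k\<bar> + 1))"
  have tp: "0 < t" "t \<le> 1" proof - have "g0 / (2 * \<bar>k\<bar> + 1) < 0" using n by (intro divide_neg_pos) auto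
    thus "0 < t" "t \<le> 1" by (auto simp: t_def) qed
  have "t * k \<le> t * \<bar>k\<bar>" using tp by (simp add: mult_left_mono)
  also have "\<dots> \<le> (- g0 / (2 * \<bar>k\<bar> + 1)) * \<bar>k\<bar>"
    by (rule mult_right_mono) (auto simp: t_def)
  also have "\<dots> = - g0 * (\<bar>k\<bar> / (2 * \<bar>k\<bar> + 1))" by simp
  also have "\<dots> < - g0 * 1"
    using n by (intro mult_strict_left_mono) auto

  finally show False using assms[OF tp] by linarith
qed

lemma lin_aux: "0 \<le> (a::real) - b + 2 * c - 2 * d \<Longrightarrow> a \<le> M \<Longrightarrow> (b - M) / 2 + d \<le> c"
  by (simp add: field_simps)

lemma key:
  fixes X :: "'a::real_vector set"
    and I :: "'a \<Rightarrow> real"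
    and \<Phi> :: "'a \<Rightarrow> 'b::real_inner"
  assumes "convex X" "convex_on X I" "affine_on X \<Phi>"
    and x: "x \<in> X" and min: "\<forall>x'\<in>X. I x + (norm (\<Phi> x))\<^sup>2 \<le> I x' + (norm (\<Phi> x'))\<^sup>2"
    and z: "z \<in> X"
  shows "0 \<le> I z - I x + 2 * inner (\<Phi> z) (\<Phi> x) - 2 * inner (\<Phi> x) (\<Phi> x)"
proof -
  define y where "y = \<Phi> x"
  define w where "w = \<Phi> z"
  define c where "c = inner w y"
  show ?thesis unfolding y_def[symmetric] w_def[symmetric] c_def[symmetric]
  proof (rule aff_lim[where k = "inner w w - 2 * c + inner y y"])
    fix t :: real assume t: "0 < t" "t \<le> 1"
    have xt: "(1 - t) *\<^sub>R x + t *\<^sub>R z \<in> X"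
      using assms(1) x z t unfolding convex_alt by auto
    have Ixt: "I ((1 - t) *\<^sub>R x + t *\<^sub>R z) \<le> (1 - t) * I x + t * I z"
      using convex_onD[OF assms(2)] t x z by auto
    have Pxt: "\<Phi> ((1 - t) *\<^sub>R x + t *\<^sub>R z) = t *\<^sub>R w + (1 - t) *\<^sub>R y"
    proof -
      have "\<Phi> (t *\<^sub>R z + (1 - t) *\<^sub>R x) = t *\<^sub>R \<Phi> z + (1 - t) *\<^sub>R \<Phi> x"
        using assms(3) t x z unfolding affine_on_def by auto
      thus ?thesis by (simp add: add.commute y_def w_def)
    qed
    have nrm: "(norm (t *\<^sub>R w + (1 - t) *\<^sub>R y))\<^sup>2 = t^2 * inner w w + 2 * t * (1 - t) * c + (1-t)^2 * inner y y"
      unfolding power2_norm_eq_inner c_def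
      by (simp add: inner_add_left inner_add_right inner_commute algebra_simps power2_eq_square)
    have "I x + inner y y \<le> (1 - t) * I x + t * I z + (t^2 * inner w w + 2 * t * (1 - t) * c + (1-t)^2 * inner y y)"
      using min[rule_format, OF xt] Ixt unfolding Pxt nrm y_def[symmetric]
      by (simp add: power2_norm_eq_inner)
    hence "0 \<le> t * (I z - I x + 2 * c - 2 * inner y y + t * (inner w w - 2 * c + inner y y))"
      by (simp add: algebra_simps power2_eq_square)
    thus "0 \<le> I z - I x + 2 * c - 2 * inner y y + t * (inner w w - 2 * c + inner y y)"
      using t by (simp add: zero_le_mult_iff)
  qed
qed

theorem theorem1p4:
  fixes X :: "'a::real_vector set"
    and I :: "'a \<Rightarrow> real"
    and \<Phi> :: "'a \<Rightarrow> 'b::real_inner"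
  assumes "convex X"
    and "convex_on X I"
    and "bdd_above (I ` X)"
    and "affine_on X \<Phi>"
    and "\<forall>y \<in> \<Phi> ` X - {0}. (INF z\<in>\<Phi> ` X. ereal (inner z y)) = -\<infinity>"
  shows "{x \<in> X. \<forall>x'\<in>X. I x + (norm (\<Phi> x))\<^sup>2 \<le> I x' + (norm (\<Phi> x'))\<^sup>2}
           \<subseteq> \<Phi> -` {0}"
proof
  fix x assume "x \<in> {x \<in> X. \<forall>x'\<in>X. I x + (norm (\<Phi> x))\<^sup>2 \<le> I x' + (norm (\<Phi> x'))\<^sup>2}"
  hence x: "x \<in> X" and min: "\<forall>x'\<in>X. I x + (norm (\<Phi> x))\<^sup>2 \<le> I x' + (norm (\<Phi> x'))\<^sup>2" by auto
  obtain M where M: "\<And>z. z \<in> X \<Longrightarrow> I z \<le> M" using assms(3) by (auto simp: bdd_above_def)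
  show "x \<in> \<Phi> -` {0}"
  proof (rule ccontr)
    assume "x \<notin> \<Phi> -` {0}"
    hence "\<Phi> x \<in> \<Phi> ` X - {0}" using x by auto
    hence inf: "(INF z\<in>\<Phi> ` X. ereal (inner z (\<Phi> x))) = -\<infinity>" using assms(5) by auto
    have "ereal ((I x - M) / 2 + inner (\<Phi> x) (\<Phi> x)) \<le> (INF z\<in>\<Phi> ` X. ereal (inner z (\<Phi> x)))"
    proof (rule INF_greatest)
      fix w assume "w \<in> \<Phi> ` X"
      then obtain z where z: "z \<in> X" "w = \<Phi> z" by auto
      have "0 \<le> I z - I x + 2 * inner (\<Phi> z) (\<Phi> x) - 2 * inner (\<Phi> x) (\<Phi> x)"
        by (rule key[OF assms(1,2,4) x min z(1)])
      thus "ereal ((I x - M) / 2 + inner (\<Phi> x) (\<Phi> x)) \<le> ereal (inner w (\<Phi> x))"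
        using M[OF z(1)] z(2) lin_aux by auto
    qed
    thus False using inf by simp
  qed
qed

end
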